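(* Let $I\subseteq\mathbb{R}$ be an interval, let $f:I\to\mathbb{R}$ be differentiable on the interior $I^{\circ}$ of $I$, let $a,b\in I^{\circ}$ with $a<b$, assume $f'\in L[a,b]$, and let $\alpha,\lambda\in[0,1]$. Suppose that $|f'|^{q}$ is $s$-convex on $[a,b]$ for some fixed $s\in(0,1]$ and some $q\geq 1$. Define $$I_f(\lambda,\alpha,a,b)=\lambda\big(\alpha f(a)+(1-\alpha)f(b)\big)+(1-\lambda)f(\alpha a+(1-\alpha)b)-\frac{1}{b-a}\int_a^b f(x)\,dx,$$ $$\gamma_1(\alpha,\lambda)=(1-\alpha)\Big[\alpha\lambda-\frac{1-\alpha}{2}\Big],\qquad \gamma_2(\alpha,\lambda)=(\alpha\lambda)^2-\gamma_1(\alpha,\lambda),$$ $$c_1(\alpha,\lambda,s)=(\alpha\lambda)^{s+2}\frac{2}{(s+1)(s+2)}-\alpha\lambda\frac{(1-\alpha)^{s+1}}{s+1}+\frac{(1-\alpha)^{s+2}}{s+2},$$ $$c_2(\alpha,\lambda,s)=(1-\alpha\lambda)^{s+2}\frac{2}{(s+1)(s+2)}-\frac{(1-\alpha\lambda)(1+\alpha^{s+1})}{s+1}+\frac{1+\alpha^{s+2}}{s+2},$$ $$c_3(\alpha,\lambda,s)=\alpha\lambda\frac{(1-\alpha)^{s+1}}{s+1}-\frac{(1-\alpha)^{s+2}}{s+2},\qquad c_4(\alpha,\lambda,s)=\frac{(\alpha\lambda-1)(1-\alpha^{s+1})}{s+1}+\frac{1-\alpha^{s+2}}{s+2}.$$ Then: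 (i) if $\alpha\lambda\leq 1-\alpha\leq 1-\lambda(1-\alpha)$, $$|I_f(\lambda,\alpha,a,b)|\leq (b-a)\Big[\gamma_2^{1-\frac1q}(\alpha,\lambda)\big(c_1(\alpha,\lambda,s)|f'(b)|^q+c_2(\alpha,\lambda,s)|f'(a)|^q\big)^{\frac1q}+\gamma_2^{1-\frac1q}(1-\alpha,\lambda)\big(c_2(1-\alpha,\lambda,s)|f'(b)|^q+c_1(1-\alpha,\lambda,s)|f'(a)|^q\big)^{\frac1q}\Big];$$ (ii) if $\alpha\lambda\leq 1-\lambda(1-\alpha)\leq 1-\alpha$, $$|I_f(\lambda,\alpha,a,b)|\leq (b-a)\Big[\gamma_2^{1-\frac1q}(\alpha,\lambda)\big(c_1(\alpha,\lambda,s)|f'(b)|^q+c_2(\alpha,\lambda,s)|f'(a)|^q\big)^{\frac1q}+\gamma_1^{1-\frac1q}(1-\alpha,\lambda)\big(c_4(1-\alpha,\lambda,s)|f'(b)|^q+c_3(1-\alpha,\lambda,s)|f'(a)|^q\big)^{\frac1q}\Big];$$ (iii) if $1-\alpha\leq\alpha\lambda\leq 1-\lambda(1-\alpha)$, $$|I_f(\lambda,\alpha,a,b)|\leq (b-a)\Big[\gamma_1^{1-\frac1q}(\alpha,\lambda)\big(c_3(\alpha,\lambda,s)|f'(b)|^q+c_4(\alpha,\lambda,s)|f'(a)|^q\big)^{\frac1q}+\gamma_2^{1-\frac1q}(1-\alpha,\lambda)\big(c_2(1-\alpha,\lambda,s)|f'(b)|^q+c_1(1-\alpha,\lambda,s)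|f'(a)|^q\big)^{\frac1q}\Big].$$
   Context: For a fixed $s\in(0,1]$, a function $g:[a,b]\to[0,\infty)$ is called $s$-convex (in the second sense) on $[a,b]$ if $g(\theta x+(1-\theta)y)\leq \theta^{s}g(x)+(1-\theta)^{s}g(y)$ for all $x,y\in[a,b]$ and all $\theta\in[0,1]$. *)

theory Defs
  imports "HOL-Analysis.Analysis"
begin

definition s_convex_on :: "real \<Rightarrow> (real \<Rightarrow> real) \<Rightarrow> real set \<Rightarrow> bool" where
  "s_convex_on s g A \<longleftrightarrow> (\<forall>x\<in>A. 0 \<le> g x) \<and>
     (\<forall>x\<in>A. \<forall>y\<in>A. \<forall>\<theta>\<in>{0..1}.
        g (\<theta> * x + (1 - \<theta>) * y) \<le> \<theta> powr s * g x + (1 - \<theta>) powr s * g y)"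

text \<open>Real power with the usual convention t^0 = 1 (Isabelle's powr has 0 powr 0 = 0).\<close>
definition rpow :: "real \<Rightarrow> real \<Rightarrow> real" where
  "rpow x e = (if e = 0 then 1 else x powr e)"

definition If_fun :: "(real \<Rightarrow> real) \<Rightarrow> real \<Rightarrow> real \<Rightarrow> real \<Rightarrow> real \<Rightarrow> real" where
  "If_fun f lam \<alpha> a b = lam * (\<alpha> * f a + (1 - \<alpha>) * f b) + (1 - lam) * f (\<alpha> * a + (1 - \<alpha>) * b)
      - integral {a..b} f / (b - a)"

definition gamma1 :: "real \<Rightarrow> real \<Rightarrow> real" where
  "gamma1 \<alpha> lam = (1 - \<alpha>) * (\<alpha> * lam - (1 - \<alpha>) / 2)"

definition gamma2 :: "real \<Rightarrow> real \<Rightarrow> real" where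
  "gamma2 \<alpha> lam = (\<alpha> * lam)\<^sup>2 - gamma1 \<alpha> lam"

definition c1 :: "real \<Rightarrow> real \<Rightarrow> real \<Rightarrow> real" where
  "c1 \<alpha> lam s = (\<alpha> * lam) powr (s + 2) * (2 / ((s + 1) * (s + 2)))
     - \<alpha> * lam * ((1 - \<alpha>) powr (s + 1) / (s + 1)) + (1 - \<alpha>) powr (s + 2) / (s + 2)"

definition c2 :: "real \<Rightarrow> real \<Rightarrow> real \<Rightarrow> real" where
  "c2 \<alpha> lam s = (1 - \<alpha> * lam) powr (s + 2) * (2 / ((s + 1) * (s + 2)))
     - (1 - \<alpha> * lam) * (1 + \<alpha> powr (s + 1)) / (s + 1) + (1 + \<alpha> powr (s + 2)) / (s + 2)"

definition c3 :: "real \<Rightarrow> real \<Rightarrow> real \<Rightarrow> real" where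
  "c3 \<alpha> lam s = \<alpha> * lam * ((1 - \<alpha>) powr (s + 1) / (s + 1)) - (1 - \<alpha>) powr (s + 2) / (s + 2)"

definition c4 :: "real \<Rightarrow> real \<Rightarrow> real \<Rightarrow> real" where
  "c4 \<alpha> lam s = (\<alpha> * lam - 1) * (1 - \<alpha> powr (s + 1)) / (s + 1) + (1 - \<alpha> powr (s + 2)) / (s + 2)"

end

theory Submission
  imports Defs
begin


lemma young_pt:
  fixes u K W q :: real
  assumes "0 \<le> u" "0 < K" "0 < W" "1 \<le> q"
  shows "u \<le> K powr (1/q) * W powr (1-1/q) * ((1/q) * (u powr q / K) + (1-1/q) / W)"
proof (cases "u = 0")
  case True
  have "0 \<le> (1/q) * (u powr q / K) + (1-1/q) / W"
    using assms by (intro add_nonneg_nonneg mult_nonneg_nonneg divide_nonneg_pos) (auto simp: field_simps)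
  then have "0 \<le> K powr (1/q) * W powr (1-1/q) * ((1/q) * (u powr q / K) + (1-1/q) / W)"
    by (intro mult_nonneg_nonneg) auto
  then show ?thesis using True by simp
next
  case False
  then have u: "u > 0" using assms by simp
  have y: "(u powr q / K) powr (1/q) * (1/W) powr (1-1/q) \<le> (1/q) * (u powr q / K) + (1-1/q) * (1/W)"
    by (rule Youngs_inequality_0) (use assms u in \<open>auto simp: field_simps\<close>)
  have e1: "(u powr q / K) powr (1/q) = u / K powr (1/q)"
    using assms u by (simp add: powr_divide powr_powr)
  have e2: "(1/W) powr (1-1/q) = 1 / W powr (1-1/q)"
    using assms by (simp add: powr_divide)
  have pK: "K powr (1/q) > 0" "W powr (1-1/q) > 0" using assms by auto
  have "u = K powr (1/q) * W powr (1-1/q) * ((u powr q / K) powr (1/q) * (1/W) powr (1-1/q))"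
    using pK by (simp add: e1 e2 field_simps)
  also have "\<dots> \<le> K powr (1/q) * W powr (1-1/q) * ((1/q) * (u powr q / K) + (1-1/q) * (1/W))"
    using y pK by (intro mult_left_mono) auto
  finally show ?thesis by simp
qed

lemma holder_aux:
  fixes w u :: "real \<Rightarrow> real" and S :: "real set"
  assumes iwu: "(\<lambda>x. w x * u x) integrable_on S"
    and iwuq: "(\<lambda>x. w x * u x powr q) integrable_on S"
    and iw: "w integrable_on S"
    and nn: "\<And>x. x \<in> S \<Longrightarrow> 0 \<le> w x \<and> 0 \<le> u x"
    and q: "1 \<le> q"
    and Wpos: "0 < integral S w"
    and JC: "integral S (\<lambda>x. w x * u x powr q) \<le> C"
  shows "integral S (\<lambda>x. w x * u x) \<le> integral S w powr (1-1/q) * C powr (1/q)"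
proof -
  define W where "W = integral S w"
  define J where "J = integral S (\<lambda>x. w x * u x powr q)"
  have J0: "0 \<le> J" unfolding J_def
    using nn by (intro integral_nonneg iwuq) auto
  have C0: "0 \<le> C" using J0 JC J_def by simp
  have key: "integral S (\<lambda>x. w x * u x) \<le> (C+e) powr (1/q) * W powr (1-1/q)" if e: "e > 0" for e
  proof -
    define K where "K = C + e"
    have K: "K > 0" using C0 e K_def by simp
    define Z where "Z = K powr (1/q) * W powr (1-1/q)"
    have Z0: "Z \<ge> 0" unfolding Z_def by simp
    have pt: "w x * u x \<le> Z * ((1/q)/K) * (w x * u x powr q) + Z * ((1-1/q)/W) * w x" if "x \<in> S" for x
    proof -
      have "u x \<le> Z * ((1/q) * (u x powr q / K) + (1-1/q) / W)"
        unfolding Z_def using young_pt[of "u x" K W q] nn[OF that] K Wpos q W_def by simp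
      then have "w x * u x \<le> w x * (Z * ((1/q) * (u x powr q / K) + (1-1/q) / W))"
        using nn[OF that] by (intro mult_left_mono) auto
      then show ?thesis by (simp add: algebra_simps)
    qed
    have i1: "(\<lambda>x. Z * ((1/q)/K) * (w x * u x powr q)) integrable_on S"
      by (rule integrable_on_mult_right[OF iwuq])
    have i2: "(\<lambda>x. Z * ((1-1/q)/W) * w x) integrable_on S"
      by (rule integrable_on_mult_right[OF iw])
    have "integral S (\<lambda>x. w x * u x) \<le> integral S (\<lambda>x. Z * ((1/q)/K) * (w x * u x powr q) + Z * ((1-1/q)/W) * w x)"
      by (intro integral_le iwu integrable_add i1 i2 pt)
    also have "\<dots> = Z*((1/q)/K) * integral S (\<lambda>x. w x * u x powr q) + Z*((1-1/q)/W) * integral S w"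
      by (simp only: integral_add[OF i1 i2] integral_mult_right)
    also have "\<dots> = Z * ((1/q)/K) * J + Z * ((1-1/q)/W) * W"
      by (simp only: J_def W_def)
    also have "\<dots> \<le> Z * ((1/q)/K) * K + Z * ((1-1/q)/W) * W"
      using JC J_def K_def e Z0 q K by (intro add_right_mono mult_left_mono) auto
    also have "\<dots> = Z" using K Wpos W_def q by (simp add: field_simps)
    finally show ?thesis unfolding Z_def K_def .
  qed
  have lim: "((\<lambda>e. (C+e) powr (1/q) * W powr (1-1/q)) \<longlongrightarrow> (C+0) powr (1/q) * W powr (1-1/q)) (at_right 0)"
    using q C0
    by (intro tendsto_intros tendsto_powr2) (auto simp: eventually_at_right_less intro!: eventually_mono[OF eventually_at_right_less[of 0]])
  have "integral S (\<lambda>x. w x * u x) \<le> (C+0) powr (1/q) * W powr (1-1/q)"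
    using tendsto_lowerbound[OF lim eventually_mono[OF eventually_at_right_less key]] by simp
  then show ?thesis unfolding W_def by (simp add: mult.commute)
qed




lemma powr_s1: "0 \<le> t \<Longrightarrow> t powr (s+1) = t * t powr s"
  for t s :: real by (simp add: powr_add powr_one)

lemma powr_s2: "0 \<le> t \<Longrightarrow> t powr (s+2) = t * t powr (s+1)"
  for t s :: real
  by (metis add.commute add.left_commute one_add_one powr_s1)

lemma int_Phi:
  fixes a b u v s mu :: real
  assumes ab: "a < b" and uv: "a \<le> u" "u \<le> v" and s: "0 < s"
  defines "L \<equiv> b - a"
  defines "Phi \<equiv> \<lambda>x. L^2 * (((x-a)/L) powr (s+2) / (s+2) - mu * ((x-a)/L) powr (s+1) / (s+1))"
  shows "((\<lambda>x. (x - (a + mu*L)) * ((x-a)/L) powr s) has_integral (Phi v - Phi u)) {u..v}"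
proof (rule fundamental_theorem_of_calculus_interior[OF uv(2)])
  have L: "L > 0" using ab L_def by simp
  show "continuous_on {u..v} Phi"
    unfolding Phi_def using L uv s
    by (intro continuous_intros continuous_on_powr') (auto simp: field_simps)
  fix x assume x: "x \<in> {u<..<v}"
  define t where "t = (x-a)/L"
  have t: "t > 0" using x uv L by (simp add: t_def field_simps)
  have dt: "((\<lambda>x. (x-a)/L) has_real_derivative 1/L) (at x)"
    using L by (auto intro!: derivative_eq_intros)
  have d2: "((\<lambda>x. ((x-a)/L) powr (s+2)) has_real_derivative (s+2) * t powr (s+1) * (1/L)) (at x)"
    using DERIV_fun_powr[OF dt, where r="s+2"] t t_def by (simp add: add.commute)
  have d1: "((\<lambda>x. ((x-a)/L) powr (s+1)) has_real_derivative (s+1) * t powr s * (1/L)) (at x)"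
    using DERIV_fun_powr[OF dt, where r="s+1"] t t_def by simp
  have "(Phi has_real_derivative L^2 * ((s+2) * t powr (s+1) * (1/L) / (s+2) - mu * ((s+1) * t powr s * (1/L)) / (s+1))) (at x)"
    unfolding Phi_def
    by (intro DERIV_cmult DERIV_diff DERIV_cdivide d1 d2)
  moreover have "L^2 * ((s+2) * t powr (s+1) * (1/L) / (s+2) - mu * ((s+1) * t powr s * (1/L)) / (s+1))
      = (x - (a + mu*L)) * ((x-a)/L) powr s"
  proof -
    have e: "s + 2 - of_nat 1 = s + 1" "s + 1 - of_nat 1 = s" by simp_all
    have s2: "s + 2 \<noteq> 0" "s + 1 \<noteq> 0" using s by simp_all
    have "(s+2) * t powr (s+1) * (1/L) / (s+2) = t powr (s+1) / L"
         "mu * ((s+1) * t powr s * (1/L)) / (s+1) = mu * t powr s / L" using s2 by simp_all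
    then have "L^2 * ((s+2) * t powr (s+1) * (1/L) / (s+2) - mu * ((s+1) * t powr s * (1/L)) / (s+1))
       = L * (t powr (s+1) - mu * t powr s)" using L by (simp add: power2_eq_square field_simps)
    also have "\<dots> = (x - (a + mu*L)) * ((x-a)/L) powr s"
      using L t by (simp add: powr_s1 t_def[symmetric]) (simp add: t_def field_simps)
    finally show ?thesis .
  qed
  ultimately show "(Phi has_vector_derivative (x - (a + mu*L)) * ((x-a)/L) powr s) (at x)"
    by (simp add: has_real_derivative_iff_has_vector_derivative)
qed

lemma int_Psi:
  fixes a b u v s mu :: real
  assumes ab: "a < b" and uv: "u \<le> v" "v \<le> b" and s: "0 < s"
  defines "L \<equiv> b - a"
  defines "Psi \<equiv> \<lambda>x. L^2 * (- (1-mu) * (1 - (x-a)/L) powr (s+1) / (s+1) + (1 - (x-a)/L) powr (s+2) / (s+2))"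
  shows "((\<lambda>x. (x - (a + mu*L)) * (1 - (x-a)/L) powr s) has_integral (Psi v - Psi u)) {u..v}"
proof (rule fundamental_theorem_of_calculus_interior[OF uv(1)])
  have L: "L > 0" using ab L_def by simp
  show "continuous_on {u..v} Psi"
    unfolding Psi_def using L uv s
    by (intro continuous_intros continuous_on_powr') (auto simp: field_simps L_def)
  fix x assume x: "x \<in> {u<..<v}"
  define t where "t = 1 - (x-a)/L"
  have t: "t > 0" using x uv L by (simp add: t_def field_simps L_def)
  have dt: "((\<lambda>x. 1 - (x-a)/L) has_real_derivative - (1/L)) (at x)"
    using L by (auto intro!: derivative_eq_intros)
  have d2: "((\<lambda>x. (1 - (x-a)/L) powr (s+2)) has_real_derivative (s+2) * t powr (s+1) * (- (1/L))) (at x)"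
    using DERIV_fun_powr[OF dt, where r="s+2"] t t_def by (simp add: add.commute)
  have d1: "((\<lambda>x. (1 - (x-a)/L) powr (s+1)) has_real_derivative (s+1) * t powr s * (- (1/L))) (at x)"
    using DERIV_fun_powr[OF dt, where r="s+1"] t t_def by simp
  have "(Psi has_real_derivative L^2 * (- (1-mu) * ((s+1) * t powr s * (- (1/L))) / (s+1) + (s+2) * t powr (s+1) * (- (1/L)) / (s+2))) (at x)"
    unfolding Psi_def
    by (intro DERIV_cmult DERIV_add DERIV_cdivide d1 d2)
  moreover have "L^2 * (- (1-mu) * ((s+1) * t powr s * (- (1/L))) / (s+1) + (s+2) * t powr (s+1) * (- (1/L)) / (s+2))
      = (x - (a + mu*L)) * (1 - (x-a)/L) powr s"
  proof -
    have e: "s + 2 - of_nat 1 = s + 1" "s + 1 - of_nat 1 = s" by simp_all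
    have s2: "s + 2 \<noteq> 0" "s + 1 \<noteq> 0" using s by simp_all
    have f1: "(s+2) * t powr (s+1) * (- (1/L)) / (s+2) = - (t powr (s+1) / L)" using s2 by simp
    have f2: "- (1-mu) * ((s+1) * t powr s * (- (1/L))) / (s+1) = (1-mu) * t powr s / L"
      using s2 by (simp add: divide_simps) (simp add: algebra_simps)
    have "L^2 * (- (1-mu) * ((s+1) * t powr s * (- (1/L))) / (s+1) + (s+2) * t powr (s+1) * (- (1/L)) / (s+2))
       = L * ((1-mu) * t powr s - t powr (s+1))" using L by (simp only: f1 f2) (simp add: power2_eq_square field_simps)
    also have "\<dots> = (x - (a + mu*L)) * (1 - (x-a)/L) powr s"
      using L t by (simp add: powr_s1 t_def[symmetric]) (simp add: t_def field_simps)
    finally show ?thesis .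
  qed
  ultimately show "(Psi has_vector_derivative (x - (a + mu*L)) * (1 - (x-a)/L) powr s) (at x)"
    by (simp add: has_real_derivative_iff_has_vector_derivative)
qed

lemma abs_left:
  fixes h :: "real \<Rightarrow> real"
  assumes "v \<le> A" "((\<lambda>x. (x - A) * h x) has_integral I) {u..v}"
  shows "((\<lambda>x. \<bar>x - A\<bar> * h x) has_integral - I) {u..v}"
  by (rule has_integral_eq[OF _ has_integral_neg[OF assms(2)]]) (use assms(1) in \<open>auto simp: algebra_simps\<close>)

lemma abs_right:
  fixes h :: "real \<Rightarrow> real"
  assumes "A \<le> u" "((\<lambda>x. (x - A) * h x) has_integral I) {u..v}"
  shows "((\<lambda>x. \<bar>x - A\<bar> * h x) has_integral I) {u..v}"
  by (rule has_integral_eq[OF _ assms(2)]) (use assms(1) in auto)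

lemma int_lin:
  fixes u v A :: real
  assumes "u \<le> v"
  shows "((\<lambda>x. (x - A) * 1) has_integral ((v-A)^2/2 - (u-A)^2/2)) {u..v}"
proof -
  have "((\<lambda>x. x - A) has_integral ((v-A)^2/2 - (u-A)^2/2)) {u..v}"
    by (rule fundamental_theorem_of_calculus[OF assms])
       (auto intro!: derivative_eq_intros simp: has_real_derivative_iff_has_vector_derivative[symmetric] power2_eq_square field_simps)
  then show ?thesis by simp
qed

lemma alg_gen: "(0::real) < s \<Longrightarrow> X * (2 / ((s+1)*(s+2))) = 2 * X / (s+1) - 2 * X / (s+2)"
  by (simp add: field_simps)

lemma weights1:
  fixes a b \<beta> lam s :: real
  assumes ab: "a < b" and \<beta>: "0 \<le> \<beta>" "\<beta> \<le> 1" and lam: "0 \<le> lam" "lam \<le> 1" and s: "0 < s"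
    and mu: "\<beta> * lam \<le> 1 - \<beta>"
  defines "L \<equiv> b - a"
  defines "A \<equiv> a + \<beta> * lam * L"
  defines "c \<equiv> a + (1 - \<beta>) * L"
  shows "((\<lambda>x. \<bar>x - A\<bar> * ((x-a)/L) powr s) has_integral L^2 * c1 \<beta> lam s) {a..c}"
    and "((\<lambda>x. \<bar>x - A\<bar> * (1 - (x-a)/L) powr s) has_integral L^2 * c2 \<beta> lam s) {a..c}"
    and "((\<lambda>x. \<bar>x - A\<bar> * 1) has_integral L^2 * gamma2 \<beta> lam) {a..c}"
proof -
  have L: "L > 0" using ab L_def by simp
  have m0: "0 \<le> \<beta> * lam" using \<beta> lam by simp
  have m1: "\<beta> * lam \<le> 1" using \<beta> lam by (simp add: mult_le_one)
  have aA: "a \<le> A" using m0 L A_def by simp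
  have Ac: "A \<le> c" using mu L A_def c_def by (simp add: mult_right_mono)
  have cb: "c \<le> b" unfolding c_def L_def using \<beta> ab mult_left_mono[of a b \<beta>] by (simp add: algebra_simps)
  have TA: "(A - a)/L = \<beta> * lam" and Tc: "(c - a)/L = 1 - \<beta>" using L A_def c_def by simp_all
  have Ta: "(a - a)/L = 0" by simp
  define p where "p = s + 1"
  define q where "q = s + 2"
  have p: "p > 0" and q: "q = p + 1" "q \<noteq> 0" using s p_def q_def by simp_all
  have pq: "2 / (p*q) = 2/p - 2/q" using p q by (simp add: field_simps)
  have H: "((\<lambda>x. \<bar>x - A\<bar> * ((x-a)/L) powr s) has_integral
      (- (L^2 * (((A-a)/L) powr (s+2) / (s+2) - (\<beta>*lam) * ((A-a)/L) powr (s+1) / (s+1))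
          - L^2 * (((a-a)/L) powr (s+2) / (s+2) - (\<beta>*lam) * ((a-a)/L) powr (s+1) / (s+1)))
       + (L^2 * (((c-a)/L) powr (s+2) / (s+2) - (\<beta>*lam) * ((c-a)/L) powr (s+1) / (s+1))
          - L^2 * (((A-a)/L) powr (s+2) / (s+2) - (\<beta>*lam) * ((A-a)/L) powr (s+1) / (s+1))))) {a..c}"
    apply (rule has_integral_combine[OF aA Ac])
    subgoal by (rule abs_left[OF order_refl]) (use int_Phi[OF ab order_refl aA s, of "\<beta>*lam"] in \<open>simp add: A_def L_def\<close>)
    subgoal by (rule abs_right[OF order_refl]) (use int_Phi[OF ab aA Ac s, of "\<beta>*lam"] in \<open>simp add: A_def L_def\<close>)
    done
  have e: "(\<beta>*lam) powr q = (\<beta>*lam) * (\<beta>*lam) powr p" using m0 unfolding p_def q_def by (rule powr_s2)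
  have V: "(- (L^2 * ((\<beta>*lam) powr (s+2) / (s+2) - (\<beta>*lam) * (\<beta>*lam) powr (s+1) / (s+1))
          - L^2 * (0 powr (s+2) / (s+2) - (\<beta>*lam) * 0 powr (s+1) / (s+1)))
       + (L^2 * ((1-\<beta>) powr (s+2) / (s+2) - (\<beta>*lam) * (1-\<beta>) powr (s+1) / (s+1))
          - L^2 * ((\<beta>*lam) powr (s+2) / (s+2) - (\<beta>*lam) * (\<beta>*lam) powr (s+1) / (s+1))))
      = L^2 * c1 \<beta> lam s"
    unfolding c1_def p_def[symmetric] q_def[symmetric] pq e using p q(2) by (simp add: field_simps)
  show "((\<lambda>x. \<bar>x - A\<bar> * ((x-a)/L) powr s) has_integral L^2 * c1 \<beta> lam s) {a..c}"
    using H unfolding TA Tc Ta V .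
  have H2: "((\<lambda>x. \<bar>x - A\<bar> * (1 - (x-a)/L) powr s) has_integral
      (- (L^2 * (- (1 - \<beta>*lam) * (1 - (A-a)/L) powr (s+1) / (s+1) + (1 - (A-a)/L) powr (s+2) / (s+2))
          - L^2 * (- (1 - \<beta>*lam) * (1 - (a-a)/L) powr (s+1) / (s+1) + (1 - (a-a)/L) powr (s+2) / (s+2)))
       + (L^2 * (- (1 - \<beta>*lam) * (1 - (c-a)/L) powr (s+1) / (s+1) + (1 - (c-a)/L) powr (s+2) / (s+2))
          - L^2 * (- (1 - \<beta>*lam) * (1 - (A-a)/L) powr (s+1) / (s+1) + (1 - (A-a)/L) powr (s+2) / (s+2))))) {a..c}"
    apply (rule has_integral_combine[OF aA Ac])
    subgoal by (rule abs_left[OF order_refl]) (use int_Psi[OF ab aA order_trans[OF Ac cb] s, of "\<beta>*lam"] in \<open>simp add: A_def L_def\<close>)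
    subgoal by (rule abs_right[OF order_refl]) (use int_Psi[OF ab Ac cb s, of "\<beta>*lam"] in \<open>simp add: A_def L_def\<close>)
    done
  have e2: "(1 - \<beta>*lam) powr q = (1 - \<beta>*lam) * (1 - \<beta>*lam) powr p" using m1 unfolding p_def q_def by (intro powr_s2) simp
  have V2: "(- (L^2 * (- (1 - \<beta>*lam) * (1 - \<beta>*lam) powr (s+1) / (s+1) + (1 - \<beta>*lam) powr (s+2) / (s+2))
          - L^2 * (- (1 - \<beta>*lam) * (1 - 0) powr (s+1) / (s+1) + (1 - 0) powr (s+2) / (s+2)))
       + (L^2 * (- (1 - \<beta>*lam) * (1 - (1-\<beta>)) powr (s+1) / (s+1) + (1 - (1-\<beta>)) powr (s+2) / (s+2))
          - L^2 * (- (1 - \<beta>*lam) * (1 - \<beta>*lam) powr (s+1) / (s+1) + (1 - \<beta>*lam) powr (s+2) / (s+2))))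
      = L^2 * c2 \<beta> lam s"
    unfolding c2_def p_def[symmetric] q_def[symmetric] pq e2 using p q(2) by (simp add: field_simps)
  show "((\<lambda>x. \<bar>x - A\<bar> * (1 - (x-a)/L) powr s) has_integral L^2 * c2 \<beta> lam s) {a..c}"
    using H2 unfolding TA Tc Ta V2 .
  have H3: "((\<lambda>x. \<bar>x - A\<bar> * 1) has_integral
      (- ((A-A)^2/2 - (a-A)^2/2) + ((c-A)^2/2 - (A-A)^2/2))) {a..c}"
    apply (rule has_integral_combine[OF aA Ac])
    subgoal by (rule abs_left[OF order_refl int_lin[OF aA]])
    subgoal by (rule abs_right[OF order_refl int_lin[OF Ac]])
    done
  have V3: "- ((A-A)^2/2 - (a-A)^2/2) + ((c-A)^2/2 - (A-A)^2/2) = L^2 * gamma2 \<beta> lam"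
    unfolding gamma2_def gamma1_def A_def c_def by (simp add: power2_eq_square field_simps)
  show "((\<lambda>x. \<bar>x - A\<bar> * 1) has_integral L^2 * gamma2 \<beta> lam) {a..c}"
    using H3 unfolding V3 .
qed

lemma weights2:
  fixes a b \<beta> lam s :: real
  assumes ab: "a < b" and \<beta>: "0 \<le> \<beta>" "\<beta> \<le> 1" and lam: "0 \<le> lam" "lam \<le> 1" and s: "0 < s"
    and mu: "1 - \<beta> \<le> \<beta> * lam"
  defines "L \<equiv> b - a"
  defines "A \<equiv> a + \<beta> * lam * L"
  defines "c \<equiv> a + (1 - \<beta>) * L"
  shows "((\<lambda>x. \<bar>x - A\<bar> * ((x-a)/L) powr s) has_integral L^2 * c3 \<beta> lam s) {a..c}"
    and "((\<lambda>x. \<bar>x - A\<bar> * (1 - (x-a)/L) powr s) has_integral L^2 * c4 \<beta> lam s) {a..c}"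
    and "((\<lambda>x. \<bar>x - A\<bar> * 1) has_integral L^2 * gamma1 \<beta> lam) {a..c}"
proof -
  have L: "L > 0" using ab L_def by simp
  have m0: "0 \<le> \<beta> * lam" using \<beta> lam by simp
  have m1: "\<beta> * lam \<le> 1" using \<beta> lam by (simp add: mult_le_one)
  have ac: "a \<le> c" using \<beta> L c_def by simp
  have cA: "c \<le> A" using mu L A_def c_def by (simp add: mult_right_mono)
  have cb: "c \<le> b" unfolding c_def L_def using \<beta> ab mult_left_mono[of a b \<beta>] by (simp add: algebra_simps)
  have Tc: "(c - a)/L = 1 - \<beta>" using L A_def c_def by simp_all
  have Ta: "(a - a)/L = 0" by simp
  define p where "p = s + 1"
  define q where "q = s + 2"
  have p: "p > 0" and q: "q = p + 1" "q \<noteq> 0" using s p_def q_def by simp_all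
  have H: "((\<lambda>x. \<bar>x - A\<bar> * ((x-a)/L) powr s) has_integral
      (- (L^2 * (((c-a)/L) powr (s+2) / (s+2) - (\<beta>*lam) * ((c-a)/L) powr (s+1) / (s+1))
          - L^2 * (((a-a)/L) powr (s+2) / (s+2) - (\<beta>*lam) * ((a-a)/L) powr (s+1) / (s+1))))) {a..c}"
    by (rule abs_left[OF cA]) (use int_Phi[OF ab order_refl ac s, of "\<beta>*lam"] in \<open>simp add: A_def L_def\<close>)
  have V: "(- (L^2 * ((1-\<beta>) powr (s+2) / (s+2) - (\<beta>*lam) * (1-\<beta>) powr (s+1) / (s+1))
          - L^2 * (0 powr (s+2) / (s+2) - (\<beta>*lam) * 0 powr (s+1) / (s+1))))
      = L^2 * c3 \<beta> lam s"
    unfolding c3_def p_def[symmetric] q_def[symmetric] using p q(2) by (simp add: field_simps)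
  show "((\<lambda>x. \<bar>x - A\<bar> * ((x-a)/L) powr s) has_integral L^2 * c3 \<beta> lam s) {a..c}"
    using H unfolding Tc Ta V .
  have H2: "((\<lambda>x. \<bar>x - A\<bar> * (1 - (x-a)/L) powr s) has_integral
      (- (L^2 * (- (1 - \<beta>*lam) * (1 - (c-a)/L) powr (s+1) / (s+1) + (1 - (c-a)/L) powr (s+2) / (s+2))
          - L^2 * (- (1 - \<beta>*lam) * (1 - (a-a)/L) powr (s+1) / (s+1) + (1 - (a-a)/L) powr (s+2) / (s+2))))) {a..c}"
    by (rule abs_left[OF cA]) (use int_Psi[OF ab ac cb s, of "\<beta>*lam"] in \<open>simp add: A_def L_def\<close>)
  have V2: "(- (L^2 * (- (1 - \<beta>*lam) * (1 - (1-\<beta>)) powr (s+1) / (s+1) + (1 - (1-\<beta>)) powr (s+2) / (s+2))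
          - L^2 * (- (1 - \<beta>*lam) * (1 - 0) powr (s+1) / (s+1) + (1 - 0) powr (s+2) / (s+2))))
      = L^2 * c4 \<beta> lam s"
    unfolding c4_def p_def[symmetric] q_def[symmetric] using p q(2) by (simp add: field_simps)
  show "((\<lambda>x. \<bar>x - A\<bar> * (1 - (x-a)/L) powr s) has_integral L^2 * c4 \<beta> lam s) {a..c}"
    using H2 unfolding Tc Ta V2 .
  have H3: "((\<lambda>x. \<bar>x - A\<bar> * 1) has_integral (- ((c-A)^2/2 - (a-A)^2/2))) {a..c}"
    by (rule abs_left[OF cA int_lin[OF ac]])
  have V3: "- ((c-A)^2/2 - (a-A)^2/2) = L^2 * gamma1 \<beta> lam"
    unfolding gamma1_def A_def c_def by (simp add: power2_eq_square field_simps)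
  show "((\<lambda>x. \<bar>x - A\<bar> * 1) has_integral L^2 * gamma1 \<beta> lam) {a..c}"
    using H3 unfolding V3 .
qed




lemma rpow_pos: "0 < x \<Longrightarrow> rpow x e = x powr e"
  by (simp add: rpow_def)

lemma rpow_nonneg: "0 \<le> rpow x e"
  by (simp add: rpow_def)

lemma half_gen:
  fixes g :: "real \<Rightarrow> real" and a b c A s q P Q G CP CQ :: real
  assumes ab: "a < b" and ac: "a \<le> c" and cb: "c \<le> b" and aA: "a \<le> A" and Ab: "A \<le> b"
    and s: "0 < s" and q: "1 \<le> q"
    and gi: "g absolutely_integrable_on {a..b}"
    and P: "0 \<le> P" and Q: "0 \<le> Q"
    and bnd: "\<And>x. x \<in> {a..b} \<Longrightarrow> \<bar>g x\<bar> powr q \<le> ((x-a)/(b-a)) powr s * P + (1 - (x-a)/(b-a)) powr s * Q"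
    and H1: "((\<lambda>x. \<bar>x - A\<bar> * 1) has_integral (b-a)^2 * G) {a..c}"
    and HP: "((\<lambda>x. \<bar>x - A\<bar> * ((x-a)/(b-a)) powr s) has_integral (b-a)^2 * CP) {a..c}"
    and HQ: "((\<lambda>x. \<bar>x - A\<bar> * (1 - (x-a)/(b-a)) powr s) has_integral (b-a)^2 * CQ) {a..c}"
    and Gpos: "c = a \<or> 0 < G"
  shows "\<bar>integral {a..c} (\<lambda>x. (x - A) * g x)\<bar> \<le> (b-a)^2 * (rpow G (1-1/q) * (CP * P + CQ * Q) powr (1/q))"
proof (cases "c = a")
  case True
  then show ?thesis by (simp add: rpow_nonneg)
next
  case False
  then have G: "0 < G" using Gpos by simp
  define L where "L = b - a"
  have L: "L > 0" using ab L_def by simp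
  define S where "S = {a..c}"
  have SS: "S \<in> sets lebesgue" unfolding S_def by simp
  have gS: "g absolutely_integrable_on S"
    unfolding S_def by (rule absolutely_integrable_on_subinterval[OF gi]) (use cb in auto)
  have gm: "g \<in> borel_measurable (lebesgue_on S)"
    by (rule absolutely_integrable_imp_borel_measurable[OF gS SS])
  have lm: "(\<lambda>x. x - A) \<in> borel_measurable (lebesgue_on S)"
    by (rule continuous_imp_measurable_on_sets_lebesgue[OF _ SS]) (intro continuous_intros)
  have lb: "bounded ((\<lambda>x. x - A) ` S)"
    unfolding S_def by (intro compact_imp_bounded compact_continuous_image continuous_intros) auto
  have f1: "(\<lambda>x. (x - A) * g x) absolutely_integrable_on S"
    by (rule absolutely_integrable_bounded_measurable_product_real[OF lm SS lb gS])
  have i1: "(\<lambda>x. (x - A) * g x) integrable_on S" using f1 by (simp add: absolutely_integrable_on_def)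
  have iwu: "(\<lambda>x. \<bar>x - A\<bar> * \<bar>g x\<bar>) integrable_on S"
    using f1 by (simp add: absolutely_integrable_on_def abs_mult)
  have le1: "\<bar>integral S (\<lambda>x. (x - A) * g x)\<bar> \<le> integral S (\<lambda>x. \<bar>x - A\<bar> * \<bar>g x\<bar>)"
    using integral_norm_bound_integral[OF i1 iwu] by (simp add: abs_mult)
  have mq: "(\<lambda>x. \<bar>x - A\<bar> * \<bar>g x\<bar> powr q) \<in> borel_measurable (lebesgue_on S)"
    using lm gm by measurable
  have bq: "\<bar>x - A\<bar> * \<bar>g x\<bar> powr q \<le> L * (P + Q)" if "x \<in> S" for x
  proof -
    have xab: "x \<in> {a..b}" using that cb unfolding S_def by auto
    have t: "0 \<le> (x-a)/L" "(x-a)/L \<le> 1" using xab L unfolding L_def by auto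
    have "\<bar>g x\<bar> powr q \<le> ((x-a)/L) powr s * P + (1 - (x-a)/L) powr s * Q"
      using bnd[OF xab] unfolding L_def .
    also have "\<dots> \<le> 1 * P + 1 * Q"
      using t s P Q by (intro add_mono mult_right_mono powr_le1) auto
    finally have g1: "\<bar>g x\<bar> powr q \<le> P + Q" by simp
    have "\<bar>x - A\<bar> \<le> L" using xab aA Ab unfolding L_def by auto
    then show ?thesis using g1 by (intro mult_mono) auto
  qed
  have iwuq: "(\<lambda>x. \<bar>x - A\<bar> * \<bar>g x\<bar> powr q) integrable_on S"
  proof -
    have "(\<lambda>x. \<bar>x - A\<bar> * \<bar>g x\<bar> powr q) absolutely_integrable_on S"
      by (rule measurable_bounded_by_integrable_imp_absolutely_integrable[OF mq SS, of "\<lambda>x. L * (P + Q)"])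
         (use bq in \<open>auto simp: S_def\<close>)
    then show ?thesis by (simp add: absolutely_integrable_on_def)
  qed
  have iw: "(\<lambda>x. \<bar>x - A\<bar>) integrable_on S" using H1 unfolding S_def by (auto simp: integrable_on_def)
  have W: "integral S (\<lambda>x. \<bar>x - A\<bar>) = L^2 * G" using H1 unfolding S_def L_def by (simp add: integral_unique)
  have HB: "((\<lambda>x. \<bar>x - A\<bar> * ((x-a)/L) powr s * P + \<bar>x - A\<bar> * (1 - (x-a)/L) powr s * Q)
      has_integral (L^2 * CP * P + L^2 * CQ * Q)) S"
    unfolding S_def L_def by (intro has_integral_add has_integral_mult_left HP HQ)
  have J: "integral S (\<lambda>x. \<bar>x - A\<bar> * \<bar>g x\<bar> powr q) \<le> L^2 * (CP * P + CQ * Q)"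
  proof -
    have "integral S (\<lambda>x. \<bar>x - A\<bar> * \<bar>g x\<bar> powr q) \<le> L^2 * CP * P + L^2 * CQ * Q"
    proof (rule has_integral_le[OF integrable_integral[OF iwuq] HB])
      fix x assume x: "x \<in> S"
      have xab: "x \<in> {a..b}" using x cb unfolding S_def by auto
      have "\<bar>x - A\<bar> * \<bar>g x\<bar> powr q \<le> \<bar>x - A\<bar> * (((x-a)/L) powr s * P + (1 - (x-a)/L) powr s * Q)"
        using bnd[OF xab] unfolding L_def by (intro mult_left_mono) auto
      then show "\<bar>x - A\<bar> * \<bar>g x\<bar> powr q \<le> \<bar>x - A\<bar> * ((x-a)/L) powr s * P + \<bar>x - A\<bar> * (1 - (x-a)/L) powr s * Q"
        by (simp add: algebra_simps)
    qed
    then show ?thesis by (simp add: algebra_simps)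
  qed
  have J0: "0 \<le> integral S (\<lambda>x. \<bar>x - A\<bar> * \<bar>g x\<bar> powr q)"
    by (intro integral_nonneg iwuq) auto
  have C0: "0 \<le> CP * P + CQ * Q"
    using J J0 L by (smt (verit) mult_pos_neg zero_less_power)
  have hol: "integral S (\<lambda>x. \<bar>x - A\<bar> * \<bar>g x\<bar>) \<le> integral S (\<lambda>x. \<bar>x - A\<bar>) powr (1-1/q) * (L^2 * (CP * P + CQ * Q)) powr (1/q)"
    by (rule holder_aux[OF iwu iwuq iw _ q _ J]) (use W L G in auto)
  also have "\<dots> = L^2 * (G powr (1-1/q) * (CP * P + CQ * Q) powr (1/q))"
  proof -
    have "(L^2 * G) powr (1-1/q) * (L^2 * (CP * P + CQ * Q)) powr (1/q)
       = (L^2) powr (1-1/q) * (L^2) powr (1/q) * (G powr (1-1/q) * (CP * P + CQ * Q) powr (1/q))"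
      using G C0 by (simp add: powr_mult)
    also have "(L^2) powr (1-1/q) * (L^2) powr (1/q) = L^2"
      using L by (simp flip: powr_add)
    finally show ?thesis unfolding W by simp
  qed
  finally show ?thesis using le1 G unfolding S_def L_def by (simp add: rpow_pos)
qed




lemma half:
  fixes g :: "real \<Rightarrow> real" and a b \<beta> lam s q P Q :: real
  assumes ab: "a < b" and \<beta>: "0 \<le> \<beta>" "\<beta> \<le> 1" and lam: "0 \<le> lam" "lam \<le> 1"
    and s: "0 < s" and q: "1 \<le> q"
    and gi: "g absolutely_integrable_on {a..b}"
    and P: "0 \<le> P" and Q: "0 \<le> Q"
    and bnd0: "\<forall>x\<in>{a..b}. \<bar>g x\<bar> powr q \<le> ((x-a)/(b-a)) powr s * P + (1 - (x-a)/(b-a)) powr s * Q"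
  shows "\<beta> * lam \<le> 1 - \<beta> \<Longrightarrow> \<bar>integral {a..a + (1-\<beta>)*(b-a)} (\<lambda>x. (x - (a + \<beta>*lam*(b-a))) * g x)\<bar>
      \<le> (b-a)^2 * (rpow (gamma2 \<beta> lam) (1-1/q) * (c1 \<beta> lam s * P + c2 \<beta> lam s * Q) powr (1/q))"
    and "1 - \<beta> \<le> \<beta> * lam \<Longrightarrow> \<bar>integral {a..a + (1-\<beta>)*(b-a)} (\<lambda>x. (x - (a + \<beta>*lam*(b-a))) * g x)\<bar>
      \<le> (b-a)^2 * (rpow (gamma1 \<beta> lam) (1-1/q) * (c3 \<beta> lam s * P + c4 \<beta> lam s * Q) powr (1/q))"
proof -
  note bnd = bnd0[rule_format]
  have L: "b - a > 0" using ab by simp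
  have m0: "0 \<le> \<beta> * lam" using \<beta> lam by simp
  have m1: "\<beta> * lam \<le> 1" using \<beta> lam by (simp add: mult_le_one)
  have ac: "a \<le> a + (1-\<beta>)*(b-a)" using \<beta> L by simp
  have "(1-\<beta>)*(b-a) \<le> 1*(b-a)" by (rule mult_right_mono) (use \<beta> L in auto)
  then have cb: "a + (1-\<beta>)*(b-a) \<le> b" by simp
  have aA: "a \<le> a + \<beta>*lam*(b-a)" using m0 L by simp
  have "\<beta>*lam*(b-a) \<le> 1*(b-a)" by (rule mult_right_mono) (use m1 L in auto)
  then have Ab: "a + \<beta>*lam*(b-a) \<le> b" by simp
  {
    assume mu: "\<beta> * lam \<le> 1 - \<beta>"
    note W = weights1[OF ab \<beta> lam s mu]
    have G: "a + (1-\<beta>)*(b-a) = a \<or> 0 < gamma2 \<beta> lam"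
    proof (cases "\<beta> = 1")
      case False
      then have r: "1 - \<beta> > 0" using \<beta> by simp
      have "gamma2 \<beta> lam = (\<beta>*lam - (1-\<beta>)/2)^2 + (1-\<beta>)^2/4"
        unfolding gamma2_def gamma1_def by (simp add: power2_eq_square field_simps)
      also have "\<dots> > 0" using r by (intro add_nonneg_pos) auto
      finally show ?thesis by simp
    qed simp
    show "\<bar>integral {a..a + (1-\<beta>)*(b-a)} (\<lambda>x. (x - (a + \<beta>*lam*(b-a))) * g x)\<bar>
      \<le> (b-a)^2 * (rpow (gamma2 \<beta> lam) (1-1/q) * (c1 \<beta> lam s * P + c2 \<beta> lam s * Q) powr (1/q))"
      by (rule half_gen[OF ab ac cb aA Ab s q gi P Q bnd W(3) W(1) W(2) G])
  }
  {
    assume mu: "1 - \<beta> \<le> \<beta> * lam"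
    note W = weights2[OF ab \<beta> lam s mu]
    have G: "a + (1-\<beta>)*(b-a) = a \<or> 0 < gamma1 \<beta> lam"
    proof (cases "\<beta> = 1")
      case False
      then have r: "1 - \<beta> > 0" using \<beta> by simp
      have "\<beta>*lam - (1-\<beta>)/2 > 0" using r mu by simp
      then have "gamma1 \<beta> lam > 0" unfolding gamma1_def using r by simp
      then show ?thesis by simp
    qed simp
    show "\<bar>integral {a..a + (1-\<beta>)*(b-a)} (\<lambda>x. (x - (a + \<beta>*lam*(b-a))) * g x)\<bar>
      \<le> (b-a)^2 * (rpow (gamma1 \<beta> lam) (1-1/q) * (c3 \<beta> lam s * P + c4 \<beta> lam s * Q) powr (1/q))"
      by (rule half_gen[OF ab ac cb aA Ab s q gi P Q bnd W(3) W(1) W(2) G])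
  }
qed




lemma ibp:
  fixes f f' :: "real \<Rightarrow> real" and u v K :: real
  assumes uv: "u \<le> v" and der: "\<And>x. x \<in> {u..v} \<Longrightarrow> (f has_real_derivative f' x) (at x)"
  shows "integral {u..v} (\<lambda>x. (x - K) * f' x) = (v - K) * f v - (u - K) * f u - integral {u..v} f"
proof -
  have contf: "continuous_on {u..v} f"
    by (rule continuous_at_imp_continuous_on) (use der DERIV_isCont in blast)
  have fi: "(f has_integral integral {u..v} f) {u..v}"
    by (rule integrable_integral[OF integrable_continuous_interval[OF contf]])
  have F: "((\<lambda>x. f x + (x - K) * f' x) has_integral ((v - K) * f v - (u - K) * f u)) {u..v}"
  proof (rule fundamental_theorem_of_calculus_interior[OF uv, where f="\<lambda>x. (x - K) * f x"])
    show "continuous_on {u..v} (\<lambda>x. (x - K) * f x)" by (intro continuous_intros contf)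
    fix x assume x: "x \<in> {u<..<v}"
    have dx: "(f has_real_derivative f' x) (at x)" using der x by auto
    have "((\<lambda>x. (x - K) * f x) has_real_derivative ((1 - 0) * f x + f' x * (x - K))) (at x)"
      by (rule DERIV_mult[OF DERIV_diff[OF DERIV_ident DERIV_const] dx])
    then show "((\<lambda>x. (x - K) * f x) has_vector_derivative f x + (x - K) * f' x) (at x)"
      by (simp add: has_real_derivative_iff_has_vector_derivative algebra_simps)
  qed
  have "((\<lambda>x. (f x + (x - K) * f' x) - f x) has_integral ((v - K) * f v - (u - K) * f u - integral {u..v} f)) {u..v}"
    by (rule has_integral_diff[OF F fi])
  then show ?thesis by (simp add: integral_unique)
qed

theorem theorem2p2:
  fixes I :: "real set" and f f' :: "real \<Rightarrow> real" and a b \<alpha> lam s q :: real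
  assumes "is_interval I"
    and "\<forall>x\<in>interior I. (f has_real_derivative f' x) (at x)"
    and "a \<in> interior I" and "b \<in> interior I" and "a < b"
    and "f' absolutely_integrable_on {a..b}"
    and "\<alpha> \<in> {0..1}" and "lam \<in> {0..1}"
    and "0 < s" and "s \<le> 1" and "1 \<le> q"
    and "s_convex_on s (\<lambda>x. \<bar>f' x\<bar> powr q) {a..b}"
  shows
    "(\<alpha> * lam \<le> 1 - \<alpha> \<and> 1 - \<alpha> \<le> 1 - lam * (1 - \<alpha>) \<longrightarrow>
       \<bar>If_fun f lam \<alpha> a b\<bar> \<le> (b - a) *
         (rpow (gamma2 \<alpha> lam) (1 - 1 / q) *
            (c1 \<alpha> lam s * \<bar>f' b\<bar> powr q + c2 \<alpha> lam s * \<bar>f' a\<bar> powr q) powr (1 / q)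
        + rpow (gamma2 (1 - \<alpha>) lam) (1 - 1 / q) *
            (c2 (1 - \<alpha>) lam s * \<bar>f' b\<bar> powr q + c1 (1 - \<alpha>) lam s * \<bar>f' a\<bar> powr q) powr (1 / q)))
   \<and> (\<alpha> * lam \<le> 1 - lam * (1 - \<alpha>) \<and> 1 - lam * (1 - \<alpha>) \<le> 1 - \<alpha> \<longrightarrow>
       \<bar>If_fun f lam \<alpha> a b\<bar> \<le> (b - a) *
         (rpow (gamma2 \<alpha> lam) (1 - 1 / q) *
            (c1 \<alpha> lam s * \<bar>f' b\<bar> powr q + c2 \<alpha> lam s * \<bar>f' a\<bar> powr q) powr (1 / q)
        + rpow (gamma1 (1 - \<alpha>) lam) (1 - 1 / q) *
            (c4 (1 - \<alpha>) lam s * \<bar>f' b\<bar> powr q + c3 (1 - \<alpha>) lam s * \<bar>f' a\<bar> powr q) powr (1 / q)))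
   \<and> (1 - \<alpha> \<le> \<alpha> * lam \<and> \<alpha> * lam \<le> 1 - lam * (1 - \<alpha>) \<longrightarrow>
       \<bar>If_fun f lam \<alpha> a b\<bar> \<le> (b - a) *
         (rpow (gamma1 \<alpha> lam) (1 - 1 / q) *
            (c3 \<alpha> lam s * \<bar>f' b\<bar> powr q + c4 \<alpha> lam s * \<bar>f' a\<bar> powr q) powr (1 / q)
        + rpow (gamma2 (1 - \<alpha>) lam) (1 - 1 / q) *
            (c2 (1 - \<alpha>) lam s * \<bar>f' b\<bar> powr q + c1 (1 - \<alpha>) lam s * \<bar>f' a\<bar> powr q) powr (1 / q)))"

proof -
  note ab = assms(5)
  define L where "L = b - a"
  have L: "L > 0" using ab L_def by simp
  have \<alpha>: "0 \<le> \<alpha>" "\<alpha> \<le> 1" using assms(7) by auto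
  have lam: "0 \<le> lam" "lam \<le> 1" using assms(8) by auto
  have s: "0 < s" using assms(9) .
  have q: "1 \<le> q" using assms(11) .
  have ii: "is_interval (interior I)" using assms(1) by (metis convex_interior is_interval_convex_1)
  have sub: "{a..b} \<subseteq> interior I"
  proof
    fix x assume "x \<in> {a..b}"
    then show "x \<in> interior I" using mem_is_interval_1_I[OF ii assms(3) assms(4)] by auto
  qed
  have der: "\<And>x. x \<in> {a..b} \<Longrightarrow> (f has_real_derivative f' x) (at x)"
    using sub assms(2) by auto
  have contf: "continuous_on {a..b} f"
    by (rule continuous_at_imp_continuous_on) (use der DERIV_isCont in blast)
  have fint: "f integrable_on {a..b}" by (rule integrable_continuous_interval[OF contf])
  define Pb where "Pb = \<bar>f' b\<bar> powr q"
  define Qa where "Qa = \<bar>f' a\<bar> powr q"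
  have Pb: "0 \<le> Pb" and Qa: "0 \<le> Qa" unfolding Pb_def Qa_def by simp_all
  have conv: "\<And>x y \<theta>. x \<in> {a..b} \<Longrightarrow> y \<in> {a..b} \<Longrightarrow> \<theta> \<in> {0..1} \<Longrightarrow>
      \<bar>f' (\<theta> * x + (1 - \<theta>) * y)\<bar> powr q \<le> \<theta> powr s * \<bar>f' x\<bar> powr q + (1 - \<theta>) powr s * \<bar>f' y\<bar> powr q"
    using assms(12) unfolding s_convex_on_def by blast
  have bnd1: "\<forall>x\<in>{a..b}. \<bar>f' x\<bar> powr q \<le> ((x-a)/(b-a)) powr s * Pb + (1 - (x-a)/(b-a)) powr s * Qa"
  proof
    fix x assume x: "x \<in> {a..b}"
    have th: "(x-a)/(b-a) \<in> {0..1}" using x ab by auto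
    have gg: "\<And>t. t * b + (1 - t) * a = a + t * (b-a)" by (simp add: algebra_simps)
    have "(x-a)/(b-a) * b + (1 - (x-a)/(b-a)) * a = a + (x-a)/(b-a) * (b-a)" by (rule gg)
    also have "\<dots> = x" using ab by simp
    finally have "(x-a)/(b-a) * b + (1 - (x-a)/(b-a)) * a = x" .
    then show "\<bar>f' x\<bar> powr q \<le> ((x-a)/(b-a)) powr s * Pb + (1 - (x-a)/(b-a)) powr s * Qa"
      using conv[of b a "(x-a)/(b-a)"] th ab unfolding Pb_def Qa_def by auto
  qed
  have bnd2: "\<forall>y\<in>{-b..-a}. \<bar>f' (- y)\<bar> powr q \<le> ((y - - b)/(- a - - b)) powr s * Qa + (1 - (y - - b)/(- a - - b)) powr s * Pb"
  proof
    fix y assume y: "y \<in> {-b..-a}"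
    have th: "(y - - b)/(- a - - b) \<in> {0..1}" using y ab by auto
    have gg: "\<And>t. t * a + (1 - t) * b = b - t * (b-a)" by (simp add: algebra_simps)
    have "(y - - b)/(- a - - b) * (b - a) = (y - - b)/(b - a) * (b - a)" by simp
    also have "\<dots> = y + b" using ab by simp
    finally have "(y - - b)/(- a - - b) * a + (1 - (y - - b)/(- a - - b)) * b = - y" unfolding gg by simp
    then show "\<bar>f' (- y)\<bar> powr q \<le> ((y - - b)/(- a - - b)) powr s * Qa + (1 - (y - - b)/(- a - - b)) powr s * Pb"
      using conv[of a b "(y - - b)/(- a - - b)"] th ab unfolding Pb_def Qa_def by auto
  qed
  have gi2: "(\<lambda>y. f' (- y)) absolutely_integrable_on {-b..-a}" using assms(6) by simp
  have ab2: "- b < - a" using ab by simp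
  have \<alpha>': "0 \<le> 1 - \<alpha>" "1 - \<alpha> \<le> 1" using \<alpha> by auto
  note H1 = half[OF ab \<alpha> lam s q assms(6) Pb Qa bnd1]
  note H2 = half[OF ab2 \<alpha>' lam s q gi2 Qa Pb bnd2]
  define c where "c = a + (1-\<alpha>)*(b-a)"
  define A where "A = a + \<alpha>*lam*(b-a)"
  define B where "B = b - (1-\<alpha>)*lam*(b-a)"
  have e1: "- b + (1 - (1 - \<alpha>)) * (- a - - b) = - c" unfolding c_def by (simp add: algebra_simps)
  have e2: "- b + (1 - \<alpha>) * lam * (- a - - b) = - B" unfolding B_def by (simp add: algebra_simps)
  have e3: "- a - - b = b - a" by simp
  have ac: "a \<le> c" unfolding c_def using \<alpha> ab by simp
  have "(1-\<alpha>)*(b-a) \<le> 1*(b-a)" by (rule mult_right_mono) (use \<alpha> ab in auto)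
  then have cb: "c \<le> b" unfolding c_def by simp
  have refl: "integral {-b..-c} (\<lambda>x. (x - - B) * f' (- x)) = integral {c..b} (\<lambda>x. (B - x) * f' x)"
    using Henstock_Kurzweil_Integration.integral_reflect_real[where a=c and b=b and f="\<lambda>x. (B - x) * f' x"]
    by (simp add: algebra_simps)
  define I1 where "I1 = integral {a..c} (\<lambda>x. (x - A) * f' x)"
  define I2 where "I2 = integral {c..b} (\<lambda>x. (B - x) * f' x)"
  have K1: "I1 = (c - A) * f c - (a - A) * f a - integral {a..c} f"
    unfolding I1_def by (rule ibp[OF ac der]) (use cb in auto)
  have K2': "integral {c..b} (\<lambda>x. (x - B) * f' x) = (b - B) * f b - (c - B) * f c - integral {c..b} f"
    by (rule ibp[OF cb der]) (use ac in auto)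
  have "I2 = - integral {c..b} (\<lambda>x. (x - B) * f' x)"
    unfolding I2_def by (simp add: integral_neg[symmetric] algebra_simps)
  then have K2: "I2 = - ((b - B) * f b - (c - B) * f c - integral {c..b} f)" using K2' by simp
  have comb: "integral {a..c} f + integral {c..b} f = integral {a..b} f"
    by (rule Henstock_Kurzweil_Integration.integral_combine[OF ac cb fint])
  have ceq: "\<alpha> * a + (1 - \<alpha>) * b = c" unfolding c_def by (simp add: algebra_simps)
  have D: "I1 - I2 = L * (lam * (\<alpha> * f a + (1 - \<alpha>) * f b) + (1 - lam) * f c) - integral {a..b} f"
    unfolding K1 K2 comb[symmetric] A_def B_def L_def by (simp add: algebra_simps)
  have IF: "If_fun f lam \<alpha> a b = (I1 - I2) / L"
    unfolding If_fun_def ceq D using L by (simp add: L_def field_simps)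
  have gen: "\<bar>If_fun f lam \<alpha> a b\<bar> \<le> (b - a) * (X1 + X2)"
    if h1: "\<bar>I1\<bar> \<le> (b-a)^2 * X1" and h2: "\<bar>I2\<bar> \<le> (b-a)^2 * X2" for X1 X2
  proof -
    have "\<bar>If_fun f lam \<alpha> a b\<bar> = \<bar>I1 - I2\<bar> / L" using L IF by simp
    also have "\<dots> \<le> (\<bar>I1\<bar> + \<bar>I2\<bar>) / L" using L by (intro divide_right_mono) auto
    also have "\<dots> \<le> ((b-a)^2 * X1 + (b-a)^2 * X2) / L" using L h1 h2 by (intro divide_right_mono) auto
    also have "\<dots> = (b - a) * (X1 + X2)" using L unfolding L_def by (simp add: power2_eq_square field_simps)
    finally show ?thesis .
  qed
  have I1eq: "I1 = integral {a..a + (1-\<alpha>)*(b-a)} (\<lambda>x. (x - (a + \<alpha>*lam*(b-a))) * f' x)"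
    unfolding I1_def c_def A_def ..
  have I2eq: "I2 = integral {- b..- b + (1 - (1 - \<alpha>)) * (- a - - b)} (\<lambda>x. (x - (- b + (1 - \<alpha>) * lam * (- a - - b))) * f' (- x))"
    unfolding e1 e2 refl I2_def ..
  show ?thesis
  proof (intro conjI impI)
    assume h: "\<alpha> * lam \<le> 1 - \<alpha> \<and> 1 - \<alpha> \<le> 1 - lam * (1 - \<alpha>)"
    have "(1 - \<alpha>) * lam \<le> 1 - (1 - \<alpha>)" using h by (simp add: algebra_simps)
    from gen[OF H1(1)[OF conjunct1[OF h], folded I1eq] H2(1)[OF this, folded I2eq, unfolded e3]]
    show "\<bar>If_fun f lam \<alpha> a b\<bar> \<le> (b - a) *
         (rpow (gamma2 \<alpha> lam) (1 - 1 / q) *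
            (c1 \<alpha> lam s * \<bar>f' b\<bar> powr q + c2 \<alpha> lam s * \<bar>f' a\<bar> powr q) powr (1 / q)
        + rpow (gamma2 (1 - \<alpha>) lam) (1 - 1 / q) *
            (c2 (1 - \<alpha>) lam s * \<bar>f' b\<bar> powr q + c1 (1 - \<alpha>) lam s * \<bar>f' a\<bar> powr q) powr (1 / q))"
      unfolding Pb_def Qa_def by (simp only: add.commute)
  next
    assume h: "\<alpha> * lam \<le> 1 - lam * (1 - \<alpha>) \<and> 1 - lam * (1 - \<alpha>) \<le> 1 - \<alpha>"
    have h1: "\<alpha> * lam \<le> 1 - \<alpha>" using h by linarith
    have h2: "1 - (1 - \<alpha>) \<le> (1 - \<alpha>) * lam" using h by (simp add: algebra_simps)
    from gen[OF H1(1)[OF h1, folded I1eq] H2(2)[OF h2, folded I2eq, unfolded e3]]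
    show "\<bar>If_fun f lam \<alpha> a b\<bar> \<le> (b - a) *
         (rpow (gamma2 \<alpha> lam) (1 - 1 / q) *
            (c1 \<alpha> lam s * \<bar>f' b\<bar> powr q + c2 \<alpha> lam s * \<bar>f' a\<bar> powr q) powr (1 / q)
        + rpow (gamma1 (1 - \<alpha>) lam) (1 - 1 / q) *
            (c4 (1 - \<alpha>) lam s * \<bar>f' b\<bar> powr q + c3 (1 - \<alpha>) lam s * \<bar>f' a\<bar> powr q) powr (1 / q))"
      unfolding Pb_def Qa_def by (simp only: add.commute)
  next
    assume h: "1 - \<alpha> \<le> \<alpha> * lam \<and> \<alpha> * lam \<le> 1 - lam * (1 - \<alpha>)"
    have h1: "1 - \<alpha> \<le> \<alpha> * lam" using h by linarith
    have h2: "(1 - \<alpha>) * lam \<le> 1 - (1 - \<alpha>)" using h by (simp add: algebra_simps)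
    from gen[OF H1(2)[OF h1, folded I1eq] H2(1)[OF h2, folded I2eq, unfolded e3]]
    show "\<bar>If_fun f lam \<alpha> a b\<bar> \<le> (b - a) *
         (rpow (gamma1 \<alpha> lam) (1 - 1 / q) *
            (c3 \<alpha> lam s * \<bar>f' b\<bar> powr q + c4 \<alpha> lam s * \<bar>f' a\<bar> powr q) powr (1 / q)
        + rpow (gamma2 (1 - \<alpha>) lam) (1 - 1 / q) *
            (c2 (1 - \<alpha>) lam s * \<bar>f' b\<bar> powr q + c1 (1 - \<alpha>) lam s * \<bar>f' a\<bar> powr q) powr (1 / q))"
      unfolding Pb_def Qa_def by (simp only: add.commute)
  qed
qed


end
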